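(* Let $\mathcal{X},\mathcal{Y}$ be finite, $P_X$ a distribution on $\mathcal{X}$, $R\ge0$, and $M=\exp(nR)$. For any joint $n$-type $Q_{\bar X\bar Y}\in\mathcal{P}_n(\mathcal{X}\times\mathcal{Y})$ with $\mathcal{Y}$-marginal $Q_{\bar Y}$, \[ D(Q_{\bar X\bar Y}\|P_XQ_{\bar Y})+\tfrac12\big[R-D(Q_{\bar X\bar Y}\|P_XQ_{\bar Y})\big]_+\le-\frac1n\log\Big(\tfrac12\mathfrak{Y}(M,Q_{\bar X\bar Y})\Big)\le D(Q_{\bar X\bar Y}\|P_XQ_{\bar Y})+\tfrac12\big[R-D(Q_{\bar X\bar Y}\|P_XQ_{\bar Y})\big]_++\kappa_n, \] where $[f]_+=\max\{0,f\}$ and $\kappa_n=\frac{|\mathcal{X}||\mathcal{Y}|}{n}\log(n+1)+\frac1n\log2$.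
   Context: Logs and exps use a common base; $D$ is relative entropy. For $y^n$ of type $Q_{\bar Y}$, let $Q_{\bar X|\bar Y}$ be the conditional type with $Q_{\bar X|\bar Y}Q_{\bar Y}=Q_{\bar X\bar Y}$, let $\mathcal{T}^n_{Q_{\bar X|\bar Y}}(y^n)$ be the set of $x^n$ whose joint empirical distribution with $y^n$ is $Q_{\bar X\bar Y}$, and $p_{Q_{\bar X|\bar Y}}(y^n)=\mathbb{P}[X^n\in\mathcal{T}^n_{Q_{\bar X|\bar Y}}(y^n)]$ with $X^n$ i.i.d. $P_X$ (this depends on $y^n$ only through $Q_{\bar Y}$). Define $\mathfrak{Y}(M,Q_{\bar X\bar Y})=\min\{2p_{Q_{\bar X|\bar Y}}(y^n),\,M^{-1/2}p_{Q_{\bar X|\bar Y}}^{1/2}(y^n)\}$. *)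

theory Defs
  imports "HOL-Analysis.Analysis" "HOL-Library.Extended_Real"
begin

(* Sequences of length n are lists of length n.  Natural logarithm / exp
   are used as the common base. *)

definition joint_type :: "'a list \<Rightarrow> 'b list \<Rightarrow> ('a \<times> 'b \<Rightarrow> real)" where
  "joint_type xs ys = (\<lambda>(a, b). real (card {i. i < length xs \<and> xs ! i = a \<and> ys ! i = b})
                                  / real (length xs))"

definition seq_type :: "'b list \<Rightarrow> ('b \<Rightarrow> real)" where
  "seq_type ys = (\<lambda>b. real (card {i. i < length ys \<and> ys ! i = b}) / real (length ys))"

definition is_joint_n_type :: "nat \<Rightarrow> ('a \<times> 'b \<Rightarrow> real) \<Rightarrow> bool" where
  "is_joint_n_type n Q \<longleftrightarrow> (\<exists>xs ys. length xs = n \<and> length ys = n \<and> Q = joint_type xs ys)"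

definition marg_Y :: "('a::finite \<times> 'b \<Rightarrow> real) \<Rightarrow> 'b \<Rightarrow> real" where
  "marg_Y Q b = (\<Sum>a\<in>UNIV. Q (a, b))"

definition cond_type_class :: "('a \<times> 'b \<Rightarrow> real) \<Rightarrow> 'b list \<Rightarrow> 'a list set" where
  "cond_type_class Q ys = {xs. length xs = length ys \<and> joint_type xs ys = Q}"

definition p_cond :: "('a \<Rightarrow> real) \<Rightarrow> ('a \<times> 'b \<Rightarrow> real) \<Rightarrow> 'b list \<Rightarrow> real" where
  "p_cond PX Q ys = (\<Sum>xs\<in>cond_type_class Q ys. \<Prod>i<length ys. PX (xs ! i))"

definition frakY :: "('a \<Rightarrow> real) \<Rightarrow> real \<Rightarrow> ('a \<times> 'b \<Rightarrow> real) \<Rightarrow> 'b list \<Rightarrow> real" where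
  "frakY PX M Q ys = min (2 * p_cond PX Q ys) (M powr (-1/2) * sqrt (p_cond PX Q ys))"

definition rel_entropy :: "('c::finite \<Rightarrow> real) \<Rightarrow> ('c \<Rightarrow> real) \<Rightarrow> ereal" where
  "rel_entropy Q P = (if \<exists>z. Q z > 0 \<and> P z = 0 then \<infinity>
     else ereal (\<Sum>z\<in>UNIV. if Q z = 0 then 0 else Q z * ln (Q z / P z)))"

definition prod_ref :: "('a \<Rightarrow> real) \<Rightarrow> ('b \<Rightarrow> real) \<Rightarrow> ('a \<times> 'b \<Rightarrow> real)" where
  "prod_ref PX QY = (\<lambda>(a, b). PX a * QY b)"

definition neg_norm_log :: "nat \<Rightarrow> real \<Rightarrow> ereal" where
  "neg_norm_log n t = (if t = 0 then \<infinity> else ereal (- (1 / real n) * ln t))"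

definition pos_part :: "ereal \<Rightarrow> ereal" where
  "pos_part f = max 0 f"

end

theory Submission
  imports Defs "HOL-Library.Multiset" "HOL-Library.FuncSet" "HOL-Library.Cardinality"
begin


definition cnt :: "'a list \<Rightarrow> 'b list \<Rightarrow> ('a \<times> 'b) \<Rightarrow> nat" where
  "cnt xs ys = count (mset (zip xs ys))"

definition cls :: "'b list \<Rightarrow> ('a \<times> 'b \<Rightarrow> nat) \<Rightarrow> 'a list set" where
  "cls ys N = {xs. length xs = length ys \<and> cnt xs ys = N}"

lemma cnt_Cons: "cnt (x#xs) (y#ys) p = cnt xs ys p + (if p = (x,y) then 1 else 0)"
  by (auto simp: cnt_def)

lemma cnt_Nil: "cnt [] ys = (\<lambda>_. 0)"
  by (auto simp: cnt_def)

lemma finite_lists: "finite {xs :: 'a::finite list. length xs = n}"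
  using finite_lists_length_eq[of "UNIV :: 'a set" n] by simp

lemma cnt_marg:
  fixes xs :: "'a::finite list"
  assumes "length xs = length ys"
  shows "(\<Sum>a\<in>UNIV. cnt xs ys (a,b)) = count (mset ys) b"
  using assms
proof (induction xs ys rule: list_induct2)
  case Nil then show ?case by (simp add: cnt_Nil)
next
  case (Cons x xs y ys)
  have "(\<Sum>a\<in>UNIV. cnt (x#xs) (y#ys) (a,b)) = (\<Sum>a\<in>UNIV. cnt xs ys (a,b)) + (\<Sum>a\<in>UNIV. (if a = x \<and> b = y then 1 else 0))"
    by (simp add: cnt_Cons sum.distrib)
  also have "(\<Sum>a\<in>UNIV. (if a = x \<and> b = y then 1 else 0::nat)) = (if b = y then 1 else 0)"
    by (cases "b = y") auto
  finally show ?case using Cons by simp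
qed

lemma prod_list_count:
  fixes f :: "'c::finite \<Rightarrow> 'd::comm_monoid_mult"
  shows "prod_list (map f zs) = (\<Prod>x\<in>UNIV. f x ^ count (mset zs) x)"
proof (induction zs)
  case Nil then show ?case by simp
next
  case (Cons z zs)
  have "(\<Prod>x\<in>UNIV. f x ^ count (mset (z#zs)) x)
      = (\<Prod>x\<in>UNIV. f x ^ count (mset zs) x * (if x = z then f x else 1))"
    by (intro prod.cong) (auto simp: mult_ac)
  also have "\<dots> = (\<Prod>x\<in>UNIV. f x ^ count (mset zs) x) * f z"
    by (simp add: prod.distrib prod.delta')
  finally show ?case using Cons by (simp add: mult.commute)
qed

lemma sum_lists:
  fixes V :: "'a::finite \<times> 'b \<Rightarrow> 'c::comm_semiring_1"
  shows "(\<Sum>xs\<in>{xs. length xs = length ys}. prod_list (map V (zip xs ys)))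
         = prod_list (map (\<lambda>b. \<Sum>a\<in>UNIV. V (a,b)) ys)"
proof (induction ys)
  case Nil
  have "{xs :: 'a list. length xs = 0} = {[]}" by auto
  then show ?case by simp
next
  case (Cons y ys)
  have eq: "{xs :: 'a list. length xs = length (y#ys)} = (\<lambda>(a,xs). a#xs) ` (UNIV \<times> {xs. length xs = length ys})"
    by (auto simp: image_iff length_Suc_conv)
  have inj: "inj_on (\<lambda>(a,xs). a#xs) (UNIV \<times> {xs :: 'a list. length xs = length ys})"
    by (auto simp: inj_on_def)
  have "(\<Sum>xs\<in>{xs. length xs = length (y#ys)}. prod_list (map V (zip xs (y#ys))))
      = (\<Sum>(a,xs)\<in>UNIV \<times> {xs. length xs = length ys}. V (a,y) * prod_list (map V (zip xs ys)))"
    unfolding eq by (subst sum.reindex[OF inj]) (simp add: case_prod_unfold)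
  also have "\<dots> = (\<Sum>a\<in>UNIV. \<Sum>xs\<in>{xs. length xs = length ys}. V (a,y) * prod_list (map V (zip xs ys)))"
    by (rule sum.cartesian_product[symmetric])
  also have "\<dots> = (\<Sum>a\<in>UNIV. V (a,y)) * (\<Sum>xs\<in>{xs. length xs = length ys}. prod_list (map V (zip xs ys)))"
    by (simp add: sum_product)
  finally show ?case using Cons by simp
qed

lemma sum_upd_minus1:
  fixes f :: "'a::finite \<Rightarrow> nat"
  assumes "f a > 0"
  shows "(\<Sum>a'\<in>UNIV. (f(a := f a - 1)) a') = (\<Sum>a'\<in>UNIV. f a') - 1"
proof -
  have r: "sum g UNIV = g a + sum g (UNIV - {a})" for g :: "'a \<Rightarrow> nat"
    by (rule sum.remove) auto
  have "(\<Sum>a'\<in>UNIV - {a}. (f(a := f a - 1)) a') = (\<Sum>a'\<in>UNIV - {a}. f a')"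
    by (rule sum.cong) auto
  then show ?thesis using assms r[of "f(a := f a - 1)"] r[of f] by simp
qed

lemma prod_fact_upd:
  fixes N :: "'c::finite \<Rightarrow> nat"
  assumes "N p > 0"
  shows "(\<Prod>q\<in>UNIV. fact (N q)) = N p * (\<Prod>q\<in>UNIV. fact ((N(p := N p - 1)) q))"
proof -
  have r: "prod g UNIV = g p * prod g (UNIV - {p})" for g :: "'c \<Rightarrow> nat"
    by (rule prod.remove) auto
  have e: "(\<Prod>q\<in>UNIV - {p}. fact ((N(p := N p - 1)) q)) = (\<Prod>q\<in>UNIV - {p}. fact (N q) :: nat)"
    by (rule prod.cong) auto
  have f: "fact (N p) = N p * (fact (N p - 1) :: nat)"
    using fact_reduce[OF assms, where 'a=nat] by (simp add: of_nat_id)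
  show ?thesis
    apply (subst r[of "\<lambda>q. fact (N q)"], subst r[of "\<lambda>q. fact ((N(p := N p - 1)) q)"])
    using e f by simp
qed

lemma card_cls:
  fixes N :: "'a::finite \<times> 'b::finite \<Rightarrow> nat"
  assumes "\<forall>b. (\<Sum>a\<in>UNIV. N (a,b)) = count (mset ys) b"
  shows "card (cls ys N) * (\<Prod>p\<in>UNIV. fact (N p)) = (\<Prod>b\<in>UNIV. fact (count (mset ys) b))"
  using assms
proof (induction ys arbitrary: N)
  case Nil
  have "N = (\<lambda>_. 0)"
  proof
    fix p :: "'a \<times> 'b" obtain a b where p: "p = (a,b)" by force
    have "(\<Sum>a\<in>UNIV. N (a,b)) = 0" using Nil by simp
    then show "N p = 0" using p by simp
  qed
  then have "cls [] N = {[] :: 'a list}" by (auto simp: cls_def cnt_Nil)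
  then show ?case using \<open>N = (\<lambda>_. 0)\<close> by simp
next
  case (Cons y ys)
  define Na where "Na a = N((a,y) := N (a,y) - 1)" for a
  define A where "A = {a. N (a,y) > 0}"
  define F where "F = (\<Prod>b\<in>UNIV. fact (count (mset ys) b) :: nat)"
  have eq: "cls (y#ys) N = (\<Union>a\<in>A. (\<lambda>xs. a#xs) ` cls ys (Na a))"
  proof (intro equalityI subsetI)
    fix xs assume "xs \<in> cls (y#ys) N"
    then obtain a xs' where xs: "xs = a#xs'" "length xs' = length ys" "cnt (a#xs') (y#ys) = N"
      by (auto simp: cls_def length_Suc_conv)
    have "N (a,y) > 0" using xs(3)[symmetric] by (simp add: cnt_Cons)
    moreover have "cnt xs' ys = Na a"
      using xs(3)[symmetric] by (auto simp: Na_def fun_eq_iff cnt_Cons)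
    ultimately show "xs \<in> (\<Union>a\<in>A. (\<lambda>xs. a#xs) ` cls ys (Na a))"
      using xs by (auto simp: A_def cls_def)
  next
    fix xs assume "xs \<in> (\<Union>a\<in>A. (\<lambda>xs. a#xs) ` cls ys (Na a))"
    then obtain a xs' where "a \<in> A" "xs = a#xs'" "length xs' = length ys" "cnt xs' ys = Na a"
      by (auto simp: cls_def)
    then show "xs \<in> cls (y#ys) N"
      by (auto simp: cls_def fun_eq_iff cnt_Cons Na_def A_def)
  qed
  have fin: "finite (cls ys M)" for M :: "'a \<times> 'b \<Rightarrow> nat"
    by (rule finite_subset[OF _ finite_lists[of "length ys"]]) (auto simp: cls_def)
  have "card (cls (y#ys) N) = (\<Sum>a\<in>A. card ((\<lambda>xs. a#xs) ` cls ys (Na a)))"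
    unfolding eq by (rule card_UN_disjoint) (auto intro: fin)
  also have "\<dots> = (\<Sum>a\<in>A. card (cls ys (Na a)))"
    by (intro sum.cong refl card_image) (auto simp: inj_on_def)
  finally have c: "card (cls (y#ys) N) = (\<Sum>a\<in>A. card (cls ys (Na a)))" .
  have tm: "card (cls ys (Na a)) * (\<Prod>p\<in>UNIV. fact (N p)) = N (a,y) * F" if "a \<in> A" for a
  proof -
    have pos: "N (a,y) > 0" using that by (simp add: A_def)
    have "\<forall>b. (\<Sum>a'\<in>UNIV. Na a (a',b)) = count (mset ys) b"
    proof
      fix b show "(\<Sum>a'\<in>UNIV. Na a (a',b)) = count (mset ys) b"
      proof (cases "b = y")
        case True
        have "(\<Sum>a'\<in>UNIV. Na a (a',b)) = (\<Sum>a'\<in>UNIV. ((\<lambda>a'. N (a',y))(a := N (a,y) - 1)) a')"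
          using True by (intro sum.cong) (auto simp: Na_def)
        also have "\<dots> = (\<Sum>a'\<in>UNIV. N (a',y)) - 1"
          using sum_upd_minus1[of "\<lambda>a'. N (a',y)" a] pos by simp
        finally show ?thesis using Cons.prems True by simp
      next
        case False
        then have "(\<Sum>a'\<in>UNIV. Na a (a',b)) = (\<Sum>a'\<in>UNIV. N (a',b))"
          by (intro sum.cong) (auto simp: Na_def)
        then show ?thesis using Cons.prems False by simp
      qed
    qed
    from Cons.IH[OF this] have ih: "card (cls ys (Na a)) * (\<Prod>p\<in>UNIV. fact (Na a p)) = F"
      by (simp add: F_def)
    have "(\<Prod>p\<in>UNIV. fact (N p)) = N (a,y) * (\<Prod>p\<in>UNIV. fact (Na a p))"
      using prod_fact_upd[of N "(a,y)"] pos by (simp add: Na_def)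
    then show ?thesis using ih by (simp add: algebra_simps)
  qed
  have "card (cls (y#ys) N) * (\<Prod>p\<in>UNIV. fact (N p)) = (\<Sum>a\<in>A. N (a,y) * F)"
    unfolding c sum_distrib_right using tm by (intro sum.cong) auto
  also have "\<dots> = (\<Sum>a\<in>UNIV. N (a,y)) * F"
    by (subst sum_distrib_right, rule sum.mono_neutral_left) (auto simp: A_def)
  also have "\<dots> = Suc (count (mset ys) y) * F" using Cons.prems by simp
  also have "\<dots> = (\<Prod>b\<in>UNIV. fact (count (mset (y#ys)) b))"
  proof -
    have "(\<Prod>b\<in>UNIV. fact (count (mset (y#ys)) b) :: nat) = fact (Suc (count (mset ys) y)) * (\<Prod>b\<in>UNIV-{y}. fact (count (mset ys) b))"
      by (simp add: prod.remove[of UNIV y])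
    moreover have "F = fact (count (mset ys) y) * (\<Prod>b\<in>UNIV-{y}. fact (count (mset ys) b))"
      unfolding F_def by (simp add: prod.remove[of UNIV y])
    ultimately show ?thesis by (simp add: algebra_simps)
  qed
  finally show ?case .
qed


lemma prod_cnt: "length xs = length ys \<Longrightarrow> prod_list (map V (zip xs ys)) = (\<Prod>p\<in>UNIV. V p ^ cnt xs ys p)"
  for V :: "'a::finite \<times> 'b::finite \<Rightarrow> 'c::comm_monoid_mult"
  by (simp add: prod_list_count cnt_def)

lemma sum_all:
  fixes N :: "'a::finite \<times> 'b::finite \<Rightarrow> nat"
  assumes "\<forall>b. (\<Sum>a\<in>UNIV. N (a,b)) = count (mset ys) b"
  shows "(\<Sum>xs\<in>{xs. length xs = length ys}. \<Prod>p\<in>UNIV. N p ^ cnt xs ys p)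
       = (\<Prod>b\<in>UNIV. count (mset ys) b ^ count (mset ys) b)"
proof -
  have "(\<Sum>xs\<in>{xs. length xs = length ys}. \<Prod>p\<in>UNIV. N p ^ cnt xs ys p)
      = (\<Sum>xs\<in>{xs. length xs = length ys}. prod_list (map N (zip xs ys)))"
    by (intro sum.cong) (auto simp: prod_cnt)
  also have "\<dots> = prod_list (map (\<lambda>b. \<Sum>a\<in>UNIV. N (a,b)) ys)" by (rule sum_lists)
  also have "\<dots> = prod_list (map (\<lambda>b. count (mset ys) b) ys)" using assms by simp
  also have "\<dots> = (\<Prod>b\<in>UNIV. count (mset ys) b ^ count (mset ys) b)" by (rule prod_list_count)
  finally show ?thesis .
qed

lemma upper:
  fixes N :: "'a::finite \<times> 'b::finite \<Rightarrow> nat"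
  assumes "\<forall>b. (\<Sum>a\<in>UNIV. N (a,b)) = count (mset ys) b"
  shows "card (cls ys N) * (\<Prod>p\<in>UNIV. N p ^ N p) \<le> (\<Prod>b\<in>UNIV. count (mset ys) b ^ count (mset ys) b)"
proof -
  have "card (cls ys N) * (\<Prod>p\<in>UNIV. N p ^ N p) = (\<Sum>xs\<in>cls ys N. \<Prod>p\<in>UNIV. N p ^ cnt xs ys p)"
    by (simp add: cls_def)
  also have "\<dots> \<le> (\<Sum>xs\<in>{xs. length xs = length ys}. \<Prod>p\<in>UNIV. N p ^ cnt xs ys p)"
    by (rule sum_mono2[OF finite_lists]) (auto simp: cls_def)
  finally show ?thesis using sum_all[OF assms] by simp
qed

lemma maxlem: "(real c)^k / fact k \<le> (real c)^c / fact c"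
proof (cases "k \<le> c")
  case True
  have "(real c)^(c - j) / (fact (c - j)::real) \<le> (real c)^c / fact c" if "j \<le> c" for j
    using that
  proof (induction j)
    case 0 then show ?case by simp
  next
    case (Suc j)
    have e: "c - j = Suc (c - Suc j)" using Suc.prems by simp
    have "(real c)^(c - Suc j) / fact (c - Suc j) \<le> (real c)^(c - j) / fact (c - j)"
    proof -
      have "(real c)^(c - j) / fact (c - j) = ((real c)^(c - Suc j) / fact (c - Suc j)) * (real c / real (Suc (c - Suc j)))"
        unfolding e by (simp add: field_simps)
      moreover have "real c / real (Suc (c - Suc j)) \<ge> 1" using Suc.prems by simp
      moreover have "(real c)^(c - Suc j) / fact (c - Suc j) \<ge> 0" by simp
      ultimately show ?thesis using mult_left_mono[of 1 "real c / real (Suc (c - Suc j))" "real c ^ (c - Suc j) / fact (c - Suc j)"] by simp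
    qed
    then show ?case using Suc by simp
  qed
  from this[of "c - k"] True show ?thesis by simp
next
  case False
  have "(real c)^(c + j) / (fact (c + j)::real) \<le> (real c)^c / fact c" for j
  proof (induction j)
    case 0 then show ?case by simp
  next
    case (Suc j)
    have "(real c)^(c + Suc j) / fact (c + Suc j) = ((real c)^(c + j) / fact (c + j)) * (real c / real (Suc (c + j)))"
      by (simp add: field_simps)
    moreover have "real c / real (Suc (c + j)) \<le> 1" by simp
    moreover have "(real c)^(c + j) / fact (c + j) \<ge> 0" by simp
    ultimately have "(real c)^(c + Suc j) / fact (c + Suc j) \<le> (real c)^(c + j) / fact (c + j)"
      by (metis mult_left_le)
    then show ?case using Suc by simp
  qed
  from this[of "k - c"] False show ?thesis by simp
qed


lemma cls_compare:
  fixes N M :: "'a::finite \<times> 'b::finite \<Rightarrow> nat"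
  assumes "\<forall>b. (\<Sum>a\<in>UNIV. N (a,b)) = count (mset ys) b"
    and "\<forall>b. (\<Sum>a\<in>UNIV. M (a,b)) = count (mset ys) b"
  shows "card (cls ys M) * (\<Prod>p\<in>UNIV. N p ^ M p) \<le> card (cls ys N) * (\<Prod>p\<in>UNIV. N p ^ N p)"
proof -
  define F where "F = (\<Prod>b\<in>UNIV. fact (count (mset ys) b) :: nat)"
  have cM: "real (card (cls ys M)) = real F / (\<Prod>p\<in>UNIV. fact (M p))"
  proof -
    have "real (card (cls ys M) * (\<Prod>p\<in>UNIV. fact (M p))) = real F"
      using card_cls[OF assms(2)] unfolding F_def by (simp only:)
    then have "real (card (cls ys M)) * (\<Prod>p\<in>UNIV. fact (M p)) = real F"
      by (simp only: of_nat_mult of_nat_prod of_nat_fact)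
    moreover have "(\<Prod>p\<in>UNIV. fact (M p) :: real) \<noteq> 0" by simp
    ultimately show ?thesis by (simp add: field_simps)
  qed
  have cN: "real (card (cls ys N)) = real F / (\<Prod>p\<in>UNIV. fact (N p))"
  proof -
    have "real (card (cls ys N) * (\<Prod>p\<in>UNIV. fact (N p))) = real F"
      using card_cls[OF assms(1)] unfolding F_def by (simp only:)
    then have "real (card (cls ys N)) * (\<Prod>p\<in>UNIV. fact (N p)) = real F"
      by (simp only: of_nat_mult of_nat_prod of_nat_fact)
    moreover have "(\<Prod>p\<in>UNIV. fact (N p) :: real) \<noteq> 0" by simp
    ultimately show ?thesis by (simp add: field_simps)
  qed
  have "real (card (cls ys M) * (\<Prod>p\<in>UNIV. N p ^ M p)) = real F * (\<Prod>p\<in>UNIV. real (N p) ^ M p / fact (M p))"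
    by (simp add: cM prod_dividef)
  also have "\<dots> \<le> real F * (\<Prod>p\<in>UNIV. real (N p) ^ N p / fact (N p))"
    by (intro mult_left_mono prod_mono) (auto simp: maxlem)
  also have "\<dots> = real (card (cls ys N) * (\<Prod>p\<in>UNIV. N p ^ N p))"
    by (simp add: cN prod_dividef)
  finally show ?thesis by (simp only: of_nat_le_iff)
qed

lemma lower:
  fixes N :: "'a::finite \<times> 'b::finite \<Rightarrow> nat"
  assumes marg: "\<forall>b. (\<Sum>a\<in>UNIV. N (a,b)) = count (mset ys) b"
  shows "(\<Prod>b\<in>UNIV. count (mset ys) b ^ count (mset ys) b)
         \<le> (length ys + 1) ^ (CARD('a) * CARD('b)) * (card (cls ys N) * (\<Prod>p\<in>UNIV. N p ^ N p))"
proof -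
  define L where "L = {xs :: 'a list. length xs = length ys}"
  define f where "f xs = (\<Prod>p\<in>UNIV. N p ^ cnt xs ys p)" for xs
  define T where "T = (\<lambda>xs. cnt xs ys) ` L"
  have finL: "finite L" unfolding L_def by (rule finite_lists)
  have "(\<Prod>b\<in>UNIV. count (mset ys) b ^ count (mset ys) b) = sum f L"
    using sum_all[OF marg] by (simp add: L_def f_def)
  also have "\<dots> = (\<Sum>\<tau>\<in>T. sum f {xs. xs \<in> L \<and> cnt xs ys = \<tau>})"
    unfolding T_def by (rule sum.image_gen[OF finL])
  also have "\<dots> = (\<Sum>\<tau>\<in>T. card (cls ys \<tau>) * (\<Prod>p\<in>UNIV. N p ^ \<tau> p))"
  proof (rule sum.cong[OF refl])
    fix \<tau> assume "\<tau> \<in> T"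
    have "{xs. xs \<in> L \<and> cnt xs ys = \<tau>} = cls ys \<tau>" by (auto simp: L_def cls_def)
    then show "sum f {xs. xs \<in> L \<and> cnt xs ys = \<tau>} = card (cls ys \<tau>) * (\<Prod>p\<in>UNIV. N p ^ \<tau> p)"
      by (simp add: f_def cls_def)
  qed
  also have "\<dots> \<le> card T * (card (cls ys N) * (\<Prod>p\<in>UNIV. N p ^ N p))"
  proof -
    have "card (cls ys \<tau>) * (\<Prod>p\<in>UNIV. N p ^ \<tau> p) \<le> card (cls ys N) * (\<Prod>p\<in>UNIV. N p ^ N p)"
      if "\<tau> \<in> T" for \<tau>
    proof -
      from that obtain xs where "length xs = length ys" "\<tau> = cnt xs ys" by (auto simp: T_def L_def)
      then have "\<forall>b. (\<Sum>a\<in>UNIV. \<tau> (a,b)) = count (mset ys) b" using cnt_marg by auto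
      then show ?thesis by (rule cls_compare[OF marg])
    qed
    then have "(\<Sum>\<tau>\<in>T. card (cls ys \<tau>) * (\<Prod>p\<in>UNIV. N p ^ \<tau> p)) \<le> of_nat (card T) * (card (cls ys N) * (\<Prod>p\<in>UNIV. N p ^ N p))"
      by (rule sum_bounded_above)
    then show ?thesis by (simp only: of_nat_id)
  qed
  also have "card T \<le> (length ys + 1) ^ (CARD('a) * CARD('b))"
  proof -
    have "T \<subseteq> PiE UNIV (\<lambda>_. {0..length ys})"
    proof
      fix \<tau> assume "\<tau> \<in> T"
      then obtain xs where "length xs = length ys" "\<tau> = cnt xs ys" by (auto simp: T_def L_def)
      moreover have "count (mset (zip xs ys)) p \<le> length ys" for p
        using count_le_size[of "mset (zip xs ys)" p] by simp
      ultimately show "\<tau> \<in> PiE UNIV (\<lambda>_. {0..length ys})"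
        by (auto simp: cnt_def PiE_UNIV_domain)
    qed
    then have "card T \<le> card (PiE UNIV (\<lambda>_::'a\<times>'b. {0..length ys}))"
      by (intro card_mono finite_PiE) auto
    also have "\<dots> = (length ys + 1) ^ (CARD('a) * CARD('b))"
      by (simp add: card_PiE card_prod)
    finally show ?thesis .
  qed
  then have "card T * (card (cls ys N) * (\<Prod>p\<in>UNIV. N p ^ N p))
     \<le> (length ys + 1) ^ (CARD('a) * CARD('b)) * (card (cls ys N) * (\<Prod>p\<in>UNIV. N p ^ N p))"
    by (rule mult_right_mono) simp
  finally show ?thesis .
qed


lemma prod_nth_list: "(\<Prod>i<length zs. f (zs!i)) = prod_list (map f zs)"
  for f :: "'c \<Rightarrow> 'd::comm_monoid_mult"
  by (induction zs) (simp_all add: prod.lessThan_Suc_shift del: prod.lessThan_Suc)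

lemma card_eq_count: "length xs = length ys \<Longrightarrow>
  card {i. i < length ys \<and> xs ! i = a \<and> ys ! i = b} = cnt xs ys (a,b)"
proof -
  assume l: "length xs = length ys"
  have "cnt xs ys (a,b) = card {i. i < length (zip xs ys) \<and> (a,b) = zip xs ys ! i}"
    by (simp add: cnt_def count_mset count_list_eq_length_filter length_filter_conv_card)
  also have "\<dots> = card {i. i < length ys \<and> xs ! i = a \<and> ys ! i = b}"
    using l by (intro arg_cong[where f=card]) (auto simp: nth_zip)
  finally show ?thesis by simp
qed

lemma jt: "length xs = length ys \<Longrightarrow> joint_type xs ys = (\<lambda>p. real (cnt xs ys p) / real (length ys))"
  by (auto simp: fun_eq_iff joint_type_def card_eq_count)

lemma st: "seq_type ys = (\<lambda>b. real (count (mset ys) b) / real (length ys))"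
  unfolding seq_type_def count_mset count_list_eq_length_filter length_filter_conv_card
  by (auto simp: fun_eq_iff intro!: arg_cong[where f=card])

lemma final_real:
  fixes n :: real
  assumes "n > 0" "l \<le> -(n*d)" "l \<ge> -(n*d) - C" "C \<ge> 0"
    and lz: "lz = min l (-(n*R)/2 + l/2 - ln 2)"
  shows "d + max 0 (R-d)/2 \<le> -(1/n)*lz \<and> -(1/n)*lz \<le> d + max 0 (R-d)/2 + (C/n + 1/n * ln 2)"
proof -
  have l2: "ln 2 > (0::real)" by simp
  have m: "n * max 0 (R-d) = max 0 (n*R - n*d)" using assms(1)
    by (simp add: max_def algebra_simps mult_le_cancel_left_pos)
  have z1: "lz \<le> l" "lz \<le> -(n*R)/2 + l/2 - ln 2" "lz = l \<or> lz = -(n*R)/2 + l/2 - ln 2"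
    unfolding lz by (auto simp: min_def)
  have AB: "n*d + n * max 0 (R-d)/2 \<le> -lz \<and> -lz \<le> n*d + n * max 0 (R-d)/2 + C + ln 2"
  proof (cases "n*d \<le> n*R")
    case True
    then have "n * max 0 (R-d) = n*R - n*d" using m by simp
    then show ?thesis using z1 assms l2 True by linarith
  next
    case False
    then have "n * max 0 (R-d) = 0" using m by simp
    then show ?thesis using z1 assms l2 False by linarith
  qed
  then have A: "n*d + n * max 0 (R-d)/2 \<le> -lz" and B: "-lz \<le> n*d + n * max 0 (R-d)/2 + C + ln 2"
    by auto
  have "d + max 0 (R-d)/2 = (n*d + n * max 0 (R-d)/2) / n" using assms(1) by (simp add: field_simps)
  also have "\<dots> \<le> -lz / n" using divide_right_mono[OF A, of n] assms(1) by simp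
  finally have 1: "d + max 0 (R-d)/2 \<le> -(1/n)*lz" by simp
  have "-(1/n)*lz = -lz / n" by simp
  also have "\<dots> \<le> (n*d + n * max 0 (R-d)/2 + C + ln 2) / n" using divide_right_mono[OF B, of n] assms(1) by simp
  also have "\<dots> = d + max 0 (R-d)/2 + (C/n + 1/n * ln 2)" using assms(1) by (simp add: field_simps)
  finally show ?thesis using 1 by simp
qed

theorem lemma13:
  fixes PX :: "'a::finite \<Rightarrow> real"
    and Q :: "'a \<times> 'b::finite \<Rightarrow> real"
    and ys :: "'b list"
    and R :: real and n :: nat
  assumes "n > 0"
    and "\<forall>a. PX a \<ge> 0" and "(\<Sum>a\<in>UNIV. PX a) = 1"
    and "R \<ge> 0"
    and "is_joint_n_type n Q"
    and "length ys = n" and "seq_type ys = marg_Y Q"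
  shows
    "rel_entropy Q (prod_ref PX (marg_Y Q))
       + ereal (1/2) * pos_part (ereal R - rel_entropy Q (prod_ref PX (marg_Y Q)))
     \<le> neg_norm_log n ((1/2) * frakY PX (exp (real n * R)) Q ys)
   \<and> neg_norm_log n ((1/2) * frakY PX (exp (real n * R)) Q ys)
     \<le> rel_entropy Q (prod_ref PX (marg_Y Q))
       + ereal (1/2) * pos_part (ereal R - rel_entropy Q (prod_ref PX (marg_Y Q)))
       + ereal (real (CARD('a)) * real (CARD('b)) / real n * ln (real n + 1)
                + 1 / real n * ln 2)"
proof -
  obtain xs0 ys0 where l0: "length xs0 = n" "length ys0 = n" and Qd: "Q = joint_type xs0 ys0"
    using assms(5) unfolding is_joint_n_type_def by blast
  define N where "N = cnt xs0 ys0"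
  have Qn: "Q = (\<lambda>p. real (N p) / real n)" using jt[of xs0 ys0] l0 Qd N_def by simp
  have mY: "marg_Y Q b = real (\<Sum>a\<in>UNIV. N (a,b)) / real n" for b
    unfolding marg_Y_def Qn by (simp add: sum_divide_distrib)
  have margN: "\<forall>b. (\<Sum>a\<in>UNIV. N (a,b)) = count (mset ys) b"
  proof
    fix b
    have "seq_type ys b = marg_Y Q b" using assms(7) by simp
    then have "real (count (mset ys) b) / real n = real (\<Sum>a\<in>UNIV. N (a,b)) / real n"
      using st[of ys] assms(6) mY by simp
    then have "real (count (mset ys) b) = real (\<Sum>a\<in>UNIV. N (a,b))"
      using assms(1) by (simp add: divide_cancel_right)
    then show "(\<Sum>a\<in>UNIV. N (a,b)) = count (mset ys) b" by (simp only: of_nat_eq_iff)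
  qed
  define Mb where "Mb b = count (mset ys) b" for b
  have QY: "marg_Y Q b = real (Mb b) / real n" for b using mY margN Mb_def by simp
  have T: "cond_type_class Q ys = cls ys N"
  proof -
    have "joint_type xs ys = Q \<longleftrightarrow> cnt xs ys = N" if "length xs = length ys" for xs
    proof -
      have "joint_type xs ys = Q \<longleftrightarrow> (\<forall>p. real (cnt xs ys p) / real n = real (N p) / real n)"
        using jt[OF that] assms(6) Qn by (auto simp: fun_eq_iff)
      also have "\<dots> \<longleftrightarrow> cnt xs ys = N" using assms(1) by (auto simp: fun_eq_iff)
      finally show ?thesis .
    qed
    then show ?thesis by (auto simp: cond_type_class_def cls_def)
  qed
  define K where "K = card (cls ys N)"
  define pi where "pi = (\<Prod>p\<in>UNIV. PX (fst p) ^ N p)"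
  have pc: "p_cond PX Q ys = real K * pi"
  proof -
    have "(\<Prod>i<length ys. PX (xs ! i)) = pi" if "xs \<in> cls ys N" for xs
    proof -
      from that have l: "length xs = length ys" "cnt xs ys = N" by (auto simp: cls_def)
      have "(\<Prod>i<length ys. PX (xs ! i)) = (\<Prod>i<length (zip xs ys). (\<lambda>p. PX (fst p)) (zip xs ys ! i))"
        using l by (intro prod.cong) auto
      also have "\<dots> = prod_list (map (\<lambda>p. PX (fst p)) (zip xs ys))" by (rule prod_nth_list)
      also have "\<dots> = pi" using prod_cnt[OF l(1), of "\<lambda>p. PX (fst p)"] l(2) pi_def by simp
      finally show ?thesis .
    qed
    then show ?thesis unfolding p_cond_def T K_def by simp
  qed
  have U: "K * (\<Prod>p\<in>UNIV. N p ^ N p) \<le> (\<Prod>b\<in>UNIV. Mb b ^ Mb b)"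
    using upper[OF margN] K_def Mb_def by simp
  have L: "(\<Prod>b\<in>UNIV. Mb b ^ Mb b) \<le> (n + 1) ^ (CARD('a) * CARD('b)) * (K * (\<Prod>p\<in>UNIV. N p ^ N p))"
    using lower[OF margN] K_def Mb_def assms(6) by simp
  show ?thesis
  proof (cases "\<exists>p. N p > 0 \<and> PX (fst p) = 0")
    case True
    then obtain a b where ab: "N (a,b) > 0" "PX a = 0" by auto
    have "pi = 0" unfolding pi_def using ab by (intro prod_zero) (auto intro!: bexI[of _ "(a,b)"])
    then have p0: "p_cond PX Q ys = 0" using pc by simp
    have fz: "frakY PX (exp (real n * R)) Q ys = 0" unfolding frakY_def p0 by simp
    have re: "rel_entropy Q (prod_ref PX (marg_Y Q)) = \<infinity>"
    proof -
      have "Q (a,b) > 0 \<and> prod_ref PX (marg_Y Q) (a,b) = 0" using ab assms(1) Qn by (simp add: prod_ref_def)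
      then show ?thesis unfolding rel_entropy_def by auto
    qed
    show ?thesis by (simp add: fz re neg_norm_log_def pos_part_def)
  next
    case False
    then have PXpos: "PX (fst p) > 0" if "N p > 0" for p
      using that assms(2) by (metis less_eq_real_def)
    have Mpos: "Mb b > 0" if "N (a,b) > 0" for a b
    proof -
      have "N (a,b) \<le> (\<Sum>a\<in>UNIV. N (a,b))" by (rule member_le_sum) auto
      then show ?thesis using that margN unfolding Mb_def by (metis order.strict_trans2)
    qed
    define P where "P = prod_ref PX (marg_Y Q)"
    have Pab: "P (a,b) = PX a * (real (Mb b) / real n)" for a b by (simp add: P_def prod_ref_def QY)
    have noinf: "\<not> (\<exists>z. Q z > 0 \<and> P z = 0)"
    proof
      assume "\<exists>z. Q z > 0 \<and> P z = 0"
      then obtain a b where "Q (a,b) > 0" "P (a,b) = 0" by auto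
      then have "N (a,b) > 0" using Qn by (simp add: zero_less_divide_iff)
      then have "PX a > 0" "Mb b > 0" using PXpos[of "(a,b)"] Mpos by auto
      then show False using \<open>P (a,b) = 0\<close> assms(1) Pab by simp
    qed
    define d where "d = (\<Sum>z\<in>UNIV. if Q z = 0 then 0 else Q z * ln (Q z / P z))"
    have re: "rel_entropy Q P = ereal d" unfolding rel_entropy_def d_def using noinf by simp
    define A where "A = (\<Prod>b\<in>UNIV. real (Mb b) ^ Mb b)"
    define B where "B = (\<Prod>p\<in>UNIV. real (N p) ^ N p)"
    define g where "g z = (if N z = 0 then 0 else real (N z) * ln (real (N z) / (PX (fst z) * real (Mb (snd z)))))" for z
    have nd: "real n * d = (\<Sum>z\<in>UNIV. g z)"
      unfolding d_def sum_distrib_left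
    proof (rule sum.cong[OF refl])
      fix z :: "'a \<times> 'b"
      obtain a b where z: "z = (a,b)" by force
      show "real n * (if Q z = 0 then 0 else Q z * ln (Q z / P z)) = g z"
      proof (cases "N z = 0")
        case True then show ?thesis using Qn by (simp add: g_def)
      next
        case False
        have "Q z / P z = real (N z) / (PX a * real (Mb b))"
          using assms(1) by (simp add: Qn Pab z field_simps)
        then show ?thesis using False assms(1) Qn z by (simp add: g_def)
      qed
    qed
    have ex: "exp (-(real n * d)) = pi * A / B"
    proof -
      have "exp (-(real n * d)) = (\<Prod>z\<in>UNIV. exp (- g z))"
        unfolding nd by (simp add: exp_sum sum_negf[symmetric])
      also have "\<dots> = (\<Prod>z\<in>UNIV. (PX (fst z) * real (Mb (snd z)) / real (N z)) ^ N z)"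
      proof (rule prod.cong[OF refl])
        fix z :: "'a \<times> 'b"
        obtain a b where z: "z = (a,b)" by force
        show "exp (- g z) = (PX (fst z) * real (Mb (snd z)) / real (N z)) ^ N z"
        proof (cases "N z = 0")
          case True then show ?thesis by (simp add: g_def)
        next
          case False
          then have pos: "PX a * real (Mb b) / real (N z) > 0"
            using PXpos[of z] Mpos[of a b] z by simp
          have "- g z = real (N z) * ln (PX a * real (Mb b) / real (N z))"
            using False pos z by (simp add: g_def ln_div ln_mult algebra_simps)
          then have "exp (- g z) = exp (ln (PX a * real (Mb b) / real (N z))) ^ N z"
            by (simp add: exp_of_nat_mult)
          then show ?thesis using pos z by simp
        qed
      qed
      also have "\<dots> = pi * (\<Prod>z\<in>UNIV. real (Mb (snd z)) ^ N z) / B"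
        unfolding pi_def B_def by (simp add: power_mult_distrib power_divide prod.distrib prod_dividef)
      also have "(\<Prod>z\<in>UNIV. real (Mb (snd z)) ^ N z) = A"
      proof -
        have "(\<Prod>z\<in>UNIV. real (Mb (snd z)) ^ N z) = (\<Prod>z\<in>UNIV \<times> UNIV. real (Mb (snd z)) ^ N z)"
          by simp
        also have "\<dots> = (\<Prod>a\<in>UNIV. \<Prod>b\<in>UNIV. real (Mb b) ^ N (a,b))"
          by (simp add: prod.cartesian_product case_prod_unfold)
        also have "\<dots> = (\<Prod>b\<in>UNIV. \<Prod>a\<in>UNIV. real (Mb b) ^ N (a,b))"
          by (rule prod.swap)
        also have "\<dots> = (\<Prod>b\<in>UNIV. real (Mb b) ^ (\<Sum>a\<in>UNIV. N (a,b)))"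
          by (simp add: power_sum)
        also have "\<dots> = A" unfolding A_def using margN Mb_def by simp
        finally show ?thesis .
      qed
      finally show ?thesis .
    qed
    have pipos: "pi > 0" unfolding pi_def
    proof (intro prod_pos)
      fix q :: "'a \<times> 'b" show "0 < PX (fst q) ^ N q" by (cases "N q = 0") (simp_all add: PXpos)
    qed
    have Bpos: "B > 0" unfolding B_def
    proof (intro prod_pos)
      fix q :: "'a \<times> 'b" show "0 < real (N q) ^ N q" by (cases "N q = 0") simp_all
    qed
    have Apos: "A > 0" unfolding A_def
    proof (intro prod_pos)
      fix q :: "'b" show "0 < real (Mb q) ^ Mb q" by (cases "Mb q = 0") simp_all
    qed
    define c where "c = CARD('a) * CARD('b)"
    have UR: "real K * B \<le> A"
    proof -
      have "real (K * (\<Prod>p\<in>UNIV. N p ^ N p)) \<le> real (\<Prod>b\<in>UNIV. Mb b ^ Mb b)"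
        using U by (simp only: of_nat_le_iff)
      then show ?thesis unfolding A_def B_def by (simp add: of_nat_prod)
    qed
    have LR: "A \<le> (real n + 1) ^ c * (real K * B)"
    proof -
      have "real (\<Prod>b\<in>UNIV. Mb b ^ Mb b) \<le> real ((n + 1) ^ c * (K * (\<Prod>p\<in>UNIV. N p ^ N p)))"
        using L unfolding c_def by (simp only: of_nat_le_iff)
      then show ?thesis unfolding A_def B_def by (simp add: of_nat_prod add.commute)
    qed
    define p where "p = p_cond PX Q ys"
    have p_le: "p \<le> exp (-(real n * d))"
    proof -
      have "real K * pi \<le> pi * A / B"
        using UR pipos Bpos by (simp add: field_simps)
      then show ?thesis using pc ex p_def by simp
    qed
    have p_ge: "exp (-(real n * d)) \<le> (real n + 1) ^ c * p"
    proof -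
      have "pi * A / B \<le> (real n + 1) ^ c * (real K * pi)"
        using LR pipos Bpos by (simp add: field_simps)
      then show ?thesis using pc ex p_def by simp
    qed
    have ppos: "p > 0"
    proof -
      have "0 < (real n + 1) ^ c * p" using p_ge by (metis exp_gt_zero less_le_trans)
      then show ?thesis by (simp add: zero_less_mult_iff)
    qed
    have l1: "ln p \<le> -(real n * d)" using p_le ppos by (metis ln_exp ln_le_cancel_iff exp_gt_zero)
    have l2: "ln p \<ge> -(real n * d) - real c * ln (real n + 1)"
    proof -
      have "-(real n * d) = ln (exp (-(real n * d)))" by simp
      also have "\<dots> \<le> ln ((real n + 1) ^ c * p)"
        using ln_le_cancel_iff[of "exp (-(real n*d))" "(real n + 1)^c * p"] p_ge ppos by simp
      also have "\<dots> = real c * ln (real n + 1) + ln p" using ppos by (simp add: ln_mult ln_realpow)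
      finally show ?thesis by simp
    qed
    have pw: "exp (real n * R) powr (-1/2) = exp (-(real n * R)/2)"
      by (simp add: powr_def)
    define z where "z = (1/2) * frakY PX (exp (real n * R)) Q ys"
    have z: "z = min p (exp (-(real n * R)/2) * sqrt p / 2)"
      unfolding z_def frakY_def pw p_def[symmetric] by (simp add: min_def)
    have q2: "exp (-(real n * R)/2) * sqrt p / 2 > 0" using ppos by simp
    have zpos: "z > 0" using z ppos q2 by simp
    have lq: "ln (exp (-(real n * R)/2) * sqrt p / 2) = -(real n * R)/2 + ln p / 2 - ln 2"
      using ppos by (simp add: ln_div ln_mult ln_sqrt)
    have lz: "ln z = min (ln p) (-(real n * R)/2 + ln p / 2 - ln 2)"
      unfolding z lq[symmetric] using ppos q2 by (simp add: min_def)
    have fin: "d + max 0 (R-d)/2 \<le> -(1/real n) * ln z \<and>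
          -(1/real n) * ln z \<le> d + max 0 (R-d)/2 + (real c * ln (real n + 1) / real n + 1 / real n * ln 2)"
      using final_real[of "real n" "ln p" d "real c * ln (real n + 1)" "ln z" R] assms(1) l1 l2 lz
      by simp
    have nz: "neg_norm_log n z = ereal (-(1/real n) * ln z)"
      using zpos by (simp add: neg_norm_log_def)
    have pp: "ereal d + ereal (1/2) * pos_part (ereal R - ereal d) = ereal (d + max 0 (R-d)/2)"
      by (simp add: pos_part_def max_def)
    have cc: "real c * ln (real n + 1) / real n = real (CARD('a)) * real (CARD('b)) / real n * ln (real n + 1)"
      by (simp add: c_def)
    show ?thesis
      using fin unfolding P_def[symmetric] z_def[symmetric] re nz pp cc
      by simp
  qed
qed

end
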